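(* Let $G=(V,E)$ be a connected $(n,d,\lambda)$ graph. Let $v_1,\dots,v_{t-1}$ ($t\ge2$) be vertices of $G$, let $B=\bigcup_{i=1}^{t-1}N[v_i]$ and $W=V\setminus B$, and suppose $|W|>\frac{\lambda}{d+\lambda}n$. Then there exists a vertex $u\in B$ such that \[ 1\le |N(u)\cap W|\le (d+\lambda)\frac{|W|}{n}+\lambda . \]
   Context: An $(n,d,\lambda)$ graph is an $n$-vertex $d$-regular graph whose adjacency matrix eigenvalues $\lambda_1\ge\dots\ge\lambda_n$ satisfy $|\lambda_i|\le\lambda$ for all $2\le i\le n$, where $\lambda\ge 0$. $N(v)$ is the set of neighbours of $v$ and $N[v]=N(v)\cup\{v\}$. (In the paper, $|N(u)\cap W|$ is called the type of $u$, and the sets arise as the black/white sets during a greedy construction of a Z-sequence.) *)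

theory Defs
  imports "Jordan_Normal_Form.Char_Poly"
begin

definition simple_graph :: "nat \<Rightarrow> (nat \<Rightarrow> nat \<Rightarrow> bool) \<Rightarrow> bool" where
  "simple_graph n E \<longleftrightarrow> (\<forall>u v. E u v \<longrightarrow> u < n \<and> v < n \<and> u \<noteq> v \<and> E v u)"

definition nbhd :: "nat \<Rightarrow> (nat \<Rightarrow> nat \<Rightarrow> bool) \<Rightarrow> nat \<Rightarrow> nat set" where
  "nbhd n E v = {u. u < n \<and> E v u}"

definition cl_nbhd :: "nat \<Rightarrow> (nat \<Rightarrow> nat \<Rightarrow> bool) \<Rightarrow> nat \<Rightarrow> nat set" where
  "cl_nbhd n E v = insert v (nbhd n E v)"

definition regular :: "nat \<Rightarrow> (nat \<Rightarrow> nat \<Rightarrow> bool) \<Rightarrow> nat \<Rightarrow> bool" where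
  "regular n E d \<longleftrightarrow> (\<forall>v<n. card (nbhd n E v) = d)"

definition connected_graph :: "nat \<Rightarrow> (nat \<Rightarrow> nat \<Rightarrow> bool) \<Rightarrow> bool" where
  "connected_graph n E \<longleftrightarrow> (\<forall>u<n. \<forall>v<n. (u, v) \<in> {(x, y). E x y}\<^sup>*)"

definition adj_mat :: "nat \<Rightarrow> (nat \<Rightarrow> nat \<Rightarrow> bool) \<Rightarrow> real mat" where
  "adj_mat n E = mat n n (\<lambda>(i, j). if E i j then 1 else 0)"

(* eigenvalues (with multiplicity) sorted decreasingly: lambda_1 >= ... >= lambda_n *)
definition adj_eigs :: "nat \<Rightarrow> (nat \<Rightarrow> nat \<Rightarrow> bool) \<Rightarrow> real list" where
  "adj_eigs n E = rev (sorted_list_of_multiset (proots (char_poly (adj_mat n E))))"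

definition ndl_graph :: "nat \<Rightarrow> (nat \<Rightarrow> nat \<Rightarrow> bool) \<Rightarrow> nat \<Rightarrow> real \<Rightarrow> bool" where
  "ndl_graph n E d lam \<longleftrightarrow> simple_graph n E \<and> regular n E d \<and> lam \<ge> 0 \<and>
     (\<forall>i. 1 \<le> i \<and> i < length (adj_eigs n E) \<longrightarrow> \<bar>adj_eigs n E ! i\<bar> \<le> lam)"

end

theory Submission
  imports Defs "Jordan_Normal_Form.Spectral_Radius"
begin

lemma real_sym_eig:
  fixes A :: "real mat"
  assumes A: "A \<in> carrier_mat n n" and n: "0 < n"
    and sym: "\<And>i j. i < n \<Longrightarrow> j < n \<Longrightarrow> A$$(i,j) = A$$(j,i)"
  shows "\<exists>e v. v \<in> carrier_vec n \<and> v \<noteq> 0\<^sub>v n \<and> A *\<^sub>v v = e \<cdot>\<^sub>v v"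
proof -
  let ?Ac = "map_mat complex_of_real A"
  have Ac: "?Ac \<in> carrier_mat n n" using A by auto
  from spectrum_non_empty[OF Ac n] obtain z where ez: "eigenvalue ?Ac z" unfolding spectrum_def by auto
  then obtain v where v: "v \<in> carrier_vec n" "v \<noteq> 0\<^sub>v n" "?Ac *\<^sub>v v = z \<cdot>\<^sub>v v"
    unfolding eigenvalue_def eigenvector_def using Ac by auto
  define S where "S = (\<Sum>i<n. \<Sum>j<n. cnj (v$i) * of_real (A$$(i,j)) * v$j)"
  have row: "(\<Sum>j<n. of_real (A$$(i,j)) * v$j) = z * v$i" if i: "i < n" for i
  proof -
    have "(?Ac *\<^sub>v v) $ i = (z \<cdot>\<^sub>v v) $ i" using v by simp
    then show ?thesis using i A v(1)
      by (simp add: scalar_prod_def row_def lessThan_atLeast0)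
  qed
  have S1: "S = z * (\<Sum>i<n. cnj (v$i) * v$i)"
  proof -
    have "S = (\<Sum>i<n. cnj (v$i) * (\<Sum>j<n. of_real (A$$(i,j)) * v$j))"
      unfolding S_def by (simp add: sum_distrib_left mult.assoc)
    also have "\<dots> = (\<Sum>i<n. z * (cnj (v$i) * v$i))"
      by (rule sum.cong) (auto simp: row)
    also have "\<dots> = z * (\<Sum>i<n. cnj (v$i) * v$i)" by (simp add: sum_distrib_left)
    finally show ?thesis .
  qed
  have S2: "cnj S = S"
  proof -
    have "cnj S = (\<Sum>i<n. \<Sum>j<n. v$i * of_real (A$$(i,j)) * cnj (v$j))"
      unfolding S_def by (simp add: cnj_sum)
    also have "\<dots> = (\<Sum>j<n. \<Sum>i<n. v$i * of_real (A$$(i,j)) * cnj (v$j))"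
      by (rule sum.swap)
    also have "\<dots> = S" unfolding S_def
    proof (intro sum.cong refl)
      fix j i assume "j \<in> {..<n}" "i \<in> {..<n}"
      then have "A$$(i,j) = A$$(j,i)" using sym by auto
      then show "v$i * of_real (A$$(i,j)) * cnj (v$j) = cnj (v$j) * of_real (A$$(j,i)) * v$i"
        by (simp add: mult_ac)
    qed
    finally show ?thesis .
  qed
  define r where "r = (\<Sum>i<n. (cmod (v$i))^2)"
  have rr: "(\<Sum>i<n. cnj (v$i) * v$i) = complex_of_real r"
    unfolding r_def of_real_sum by (rule sum.cong[OF refl]) (metis complex_norm_square mult.commute)
  obtain i where i: "i < n" "v $ i \<noteq> 0" using v by (metis eq_vecI carrier_vecD index_zero_vec)
  have "0 < r" unfolding r_def
    by (rule sum_pos2[of "{..<n}" i], use i in auto)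
  from S1 S2 rr have "cnj z * complex_of_real r = z * complex_of_real r"
    by (metis complex_cnj_complex_of_real complex_cnj_mult)
  with \<open>0 < r\<close> have "cnj z = z" by simp
  hence zr: "z = complex_of_real (Re z)" by (metis Reals_cnj_iff complex_is_Real_iff of_real_Re)
  have "poly (char_poly ?Ac) z = 0" using ez eigenvalue_root_char_poly[OF Ac] by simp
  also have "char_poly ?Ac = map_poly complex_of_real (char_poly A)"
    using of_real_hom.char_poly_hom[OF A] by simp
  finally have "poly (map_poly complex_of_real (char_poly A)) (complex_of_real (Re z)) = 0"
    using zr by simp
  hence "poly (char_poly A) (Re z) = 0" by (simp add: of_real_hom.poly_map_poly)
  hence "eigenvalue A (Re z)" using eigenvalue_root_char_poly[OF A] by simp
  then show ?thesis unfolding eigenvalue_def eigenvector_def using A by auto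
qed

lemma mult_entry:
  assumes "A \<in> carrier_mat nr n" "B \<in> carrier_mat n nc" "i < nr" "j < nc"
  shows "(A * B) $$ (i,j) = (\<Sum>k<n. A$$(i,k) * B$$(k,j))"
  using assms by (simp add: scalar_prod_def lessThan_atLeast0)

lemma sum_delta_left: "i < (n::nat) \<Longrightarrow> (\<Sum>k<n. (if i = k then 1 else 0) * (f k :: real)) = f i"
proof -
  assume i: "i < n"
  have "(\<Sum>k<n. (if i = k then 1 else 0) * f k) = (\<Sum>k<n. if k = i then f k else 0)"
    by (rule sum.cong) auto
  also have "\<dots> = f i" using i by (subst sum.delta) auto
  finally show ?thesis .
qed

lemma sum_delta_right: "i < (n::nat) \<Longrightarrow> (\<Sum>k<n. (if k = i then 1 else 0) * (f k :: real)) = f i"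
proof -
  assume i: "i < n"
  have "(\<Sum>k<n. (if k = i then 1 else 0) * f k) = (\<Sum>k<n. if k = i then f k else 0)"
    by (rule sum.cong) auto
  also have "\<dots> = f i" using i by simp
  finally show ?thesis .
qed

lemma householder:
  fixes u :: "real vec"
  assumes u: "u \<in> carrier_vec n" "0 < n" "(\<Sum>i<n. (u$i)^2) = 1"
  shows "\<exists>H \<in> carrier_mat n n. (\<forall>i<n. \<forall>j<n. H$$(i,j) = H$$(j,i)) \<and> H * H = 1\<^sub>m n
     \<and> (\<forall>i<n. H$$(i,0) = u$i)"
proof -
  define w where "w i = u$i - (if i = 0 then 1 else 0)" for i
  define s where "s = (\<Sum>k<n. (w k)^2)"
  define H where "H = mat n n (\<lambda>(i,j). (if i = j then 1 else 0) - 2 * w i * w j / s)"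
  have H: "H \<in> carrier_mat n n" unfolding H_def by simp
  have Hij: "H$$(i,j) = (if i = j then 1 else 0) - 2 * w i * w j / s" if "i < n" "j < n" for i j
    using that unfolding H_def by simp
  have s0: "w i = 0" if "s = 0" "i < n" for i
  proof -
    have "(w i)^2 = 0"
      using that sum_nonneg_eq_0_iff[of "{..<n}" "\<lambda>k. (w k)^2"] unfolding s_def by auto
    then show ?thesis by simp
  qed
  have sw: "s = - 2 * w 0"
  proof -
    have "s = (\<Sum>k<n. (u$k)^2 - 2 * (if k = 0 then u$k else 0) + (if k = 0 then 1 else 0))"
      unfolding s_def w_def by (rule sum.cong) (auto simp: power2_eq_square algebra_simps)
    also have "\<dots> = 1 - 2 * u$0 + 1"
      using u by (simp add: sum.distrib sum_subtractf sum_distrib_left[symmetric])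
    finally show ?thesis unfolding w_def by simp
  qed
  have symm: "\<forall>i<n. \<forall>j<n. H$$(i,j) = H$$(j,i)" by (auto simp: Hij mult_ac)
  have col0: "\<forall>i<n. H$$(i,0) = u$i"
  proof (intro allI impI)
    fix i assume i: "i < n"
    show "H$$(i,0) = u$i"
    proof (cases "s = 0")
      case True
      then show ?thesis using s0[OF True i] u i by (simp add: Hij w_def split: if_splits)
    next
      case False
      then have "2 * w i * w 0 / s = - w i" using sw by (simp add: field_simps)
      then show ?thesis using i u by (simp add: Hij w_def)
    qed
  qed
  have HH: "H * H = 1\<^sub>m n"
  proof (rule eq_matI)
    fix i j assume i: "i < dim_row (1\<^sub>m n :: real mat)" and j: "j < dim_col (1\<^sub>m n :: real mat)"
    then have i: "i < n" and j: "j < n" by auto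
    show "(H * H) $$ (i,j) = 1\<^sub>m n $$ (i,j)"
    proof (cases "s = 0")
      case True
      then show ?thesis using i j s0[OF True] by (simp add: mult_entry[OF H H] Hij sum_delta_left)
    next
      case False
      have "(H * H) $$ (i,j) = (\<Sum>k<n. ((if i = k then 1 else 0) - 2 * w i * w k / s) *
          ((if k = j then 1 else 0) - 2 * w k * w j / s))"
        using i j by (simp add: mult_entry[OF H H] Hij)
      also have "\<dots> = (\<Sum>k<n. (if i = k then 1 else 0) * (if k = j then 1 else 0)
          - (if i = k then 1 else 0) * (2 * w k * w j / s)
          - (if k = j then 1 else 0) * (2 * w i * w k / s)
          + (4 * w i * w j / s^2) * (w k)^2)"
        by (rule sum.cong) (auto simp: algebra_simps power2_eq_square)
      also have "\<dots> = (if i = j then 1 else 0) - 2 * w i * w j / s - 2 * w i * w j / s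
          + (4 * w i * w j / s^2) * s"
      proof -
        have t1: "(\<Sum>k<n. (if i = k then 1 else 0) * (if k = j then 1 else 0)) = (if i = j then 1 else (0::real))"
          using sum_delta_left[OF i, of "\<lambda>k. if k = j then 1 else 0"] by simp
        have t2: "(\<Sum>k<n. (if i = k then 1 else 0) * (2 * w k * w j / s)) = 2 * w i * w j / s"
          using sum_delta_left[OF i, of "\<lambda>k. 2 * w k * w j / s"] by simp
        have t3: "(\<Sum>k<n. (if k = j then 1 else 0) * (2 * w i * w k / s)) = 2 * w i * w j / s"
          using sum_delta_right[OF j, of "\<lambda>k. 2 * w i * w k / s"] by simp
        have t4: "(\<Sum>k<n. (4 * w i * w j / s^2) * (w k)^2) = (4 * w i * w j / s^2) * s"
          unfolding s_def by (simp add: sum_distrib_left)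
        show ?thesis
          by (simp only: sum.distrib sum_subtractf t1 t2 t3 t4)
      qed
      also have "\<dots> = (if i = j then 1 else 0)" using False by (simp add: power2_eq_square field_simps)
      finally show ?thesis using i j by simp
    qed
  qed (use H in auto)
  show ?thesis using H symm HH col0 by blast
qed

lemma transp_entry:
  assumes "P \<in> carrier_mat n n" "Q \<in> carrier_mat n n" "i < n" "j < n"
  shows "(transpose_mat P * Q)$$(i,j) = (\<Sum>k<n. P$$(k,i) * Q$$(k,j))"
proof -
  have "(transpose_mat P * Q)$$(i,j) = (\<Sum>k<n. (transpose_mat P)$$(i,k) * Q$$(k,j))"
    by (rule mult_entry) (use assms in auto)
  also have "\<dots> = (\<Sum>k<n. P$$(k,i) * Q$$(k,j))"
    by (rule sum.cong) (use assms in auto)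
  finally show ?thesis .
qed

lemma triple_entry:
  assumes P: "P \<in> carrier_mat n n" and M: "M \<in> carrier_mat n n" and "i < n" "j < n"
  shows "(transpose_mat P * M * P)$$(i,j) = (\<Sum>l<n. (\<Sum>k<n. P$$(k,i) * M$$(k,l)) * P$$(l,j))"
proof -
  have "(transpose_mat P * M * P)$$(i,j) = (\<Sum>l<n. (transpose_mat P * M)$$(i,l) * P$$(l,j))"
    by (rule mult_entry) (use assms in auto)
  also have "\<dots> = (\<Sum>l<n. (\<Sum>k<n. P$$(k,i) * M$$(k,l)) * P$$(l,j))"
  proof (rule sum.cong[OF refl])
    fix l assume "l \<in> {..<n}"
    then show "(transpose_mat P * M)$$(i,l) * P$$(l,j) = (\<Sum>k<n. P$$(k,i) * M$$(k,l)) * P$$(l,j)"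
      using transp_entry[OF P M \<open>i < n\<close>, of l] by simp
  qed
  finally show ?thesis .
qed

lemma spectral:
  fixes A :: "real mat"
  assumes "A \<in> carrier_mat n n" "\<And>i j. i<n \<Longrightarrow> j<n \<Longrightarrow> A$$(i,j) = A$$(j,i)"
  shows "\<exists>U \<mu>. U \<in> carrier_mat n n \<and> transpose_mat U * U = 1\<^sub>m n \<and>
     transpose_mat U * A * U = mat n n (\<lambda>(i,j). if i = j then \<mu> i else 0)"
  using assms
proof (induction n arbitrary: A)
  case 0
  show ?case
    by (rule exI[of _ "1\<^sub>m 0"], rule exI[of _ "\<lambda>_. 0"]) (auto intro!: eq_matI)
next
  case (Suc m)
  note A = Suc.prems(1)
  note Asym = Suc.prems(2)
  let ?n = "Suc m"
  obtain e v where v: "v \<in> carrier_vec ?n" "v \<noteq> 0\<^sub>v ?n" "A *\<^sub>v v = e \<cdot>\<^sub>v v"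
    using real_sym_eig[OF A _ Asym] by auto
  define c where "c = (\<Sum>i<?n. (v$i)^2)"
  obtain i0 where i0: "i0 < ?n" "v $ i0 \<noteq> 0" using v by (metis eq_vecI carrier_vecD index_zero_vec)
  have c0: "0 < c" unfolding c_def by (rule sum_pos2[of "{..<?n}" i0]) (use i0 in auto)
  define u where "u = (1 / sqrt c) \<cdot>\<^sub>v v"
  have u: "u \<in> carrier_vec ?n" unfolding u_def using v by simp
  have u1: "(\<Sum>i<?n. (u$i)^2) = 1"
  proof -
    have "(\<Sum>i<?n. (u$i)^2) = (\<Sum>i<?n. (v$i)^2 / c)"
      using v c0 by (intro sum.cong refl) (simp add: u_def power_divide power_mult_distrib)
    also have "\<dots> = (\<Sum>i<?n. (v$i)^2) / c" by (rule sum_divide_distrib[symmetric])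
    also have "\<dots> = 1" using c0 unfolding c_def[symmetric] by simp
    finally show ?thesis .
  qed
  have Au: "A *\<^sub>v u = e \<cdot>\<^sub>v u"
    unfolding u_def using v A by (simp add: mult_mat_vec smult_smult_assoc mult.commute)
  obtain H where H: "H \<in> carrier_mat ?n ?n" and Hsym: "\<forall>i<?n. \<forall>j<?n. H$$(i,j) = H$$(j,i)"
    and HH: "H * H = 1\<^sub>m ?n" and Hc: "\<forall>i<?n. H$$(i,0) = u$i"
    using householder[OF u _ u1] by auto
  have HT: "transpose_mat H = H" using H Hsym by (intro eq_matI) auto
  have AT: "transpose_mat A = A" using A Asym by (intro eq_matI) auto
  define A' where "A' = H * (A * H)"
  have A': "A' \<in> carrier_mat ?n ?n" unfolding A'_def using H A by simp
  have A'T: "transpose_mat A' = A'"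
  proof -
    have AH: "A * H \<in> carrier_mat ?n ?n" using A H by simp
    have "transpose_mat A' = transpose_mat (A * H) * transpose_mat H"
      unfolding A'_def by (rule transpose_mult[OF H AH])
    also have "transpose_mat (A * H) = transpose_mat H * transpose_mat A"
      by (rule transpose_mult[OF A H])
    finally have "transpose_mat A' = H * A * H" using HT AT by simp
    also have "\<dots> = A'" unfolding A'_def by (rule assoc_mult_mat[OF H A H])
    finally show ?thesis .
  qed
  have A'sym: "A'$$(i,j) = A'$$(j,i)" if "i < ?n" "j < ?n" for i j
  proof -
    have "transpose_mat A' $$ (j,i) = A'$$(j,i)" using A'T by simp
    then show ?thesis using that A' by simp
  qed
  have AH0: "(A * H)$$(k,0) = e * H$$(k,0)" if k: "k < ?n" for k
  proof -
    have "(A * H)$$(k,0) = (\<Sum>l<?n. A$$(k,l) * H$$(l,0))"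
      by (rule mult_entry[OF A H k]) simp
    also have "\<dots> = (\<Sum>l<?n. A$$(k,l) * u$l)"
      by (rule sum.cong[OF refl]) (use Hc in simp)
    also have "\<dots> = (A *\<^sub>v u) $ k" using k A u by (simp add: scalar_prod_def lessThan_atLeast0 del: sum.lessThan_Suc)
    also have "\<dots> = e * H$$(k,0)" using Au k u Hc by simp
    finally show ?thesis .
  qed
  have A'0: "A'$$(i,0) = (if i = 0 then e else 0)" if i: "i < ?n" for i
  proof -
    have AH: "A * H \<in> carrier_mat ?n ?n" using A H by simp
    have "A'$$(i,0) = (\<Sum>k<?n. H$$(i,k) * (A * H)$$(k,0))"
      unfolding A'_def by (rule mult_entry[OF H AH i]) simp
    also have "\<dots> = (\<Sum>k<?n. e * (H$$(i,k) * H$$(k,0)))"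
      by (rule sum.cong[OF refl]) (simp add: AH0)
    also have "\<dots> = e * (H * H)$$(i,0)"
      by (subst mult_entry[OF H H i]) (simp_all add: sum_distrib_left del: sum.lessThan_Suc)
    also have "\<dots> = (if i = 0 then e else 0)" using HH i by simp
    finally show ?thesis .
  qed
  define A3 where "A3 = mat m m (\<lambda>(i,j). A'$$(Suc i, Suc j))"
  have A3: "A3 \<in> carrier_mat m m" unfolding A3_def by simp
  have A3sym: "A3$$(i,j) = A3$$(j,i)" if "i < m" "j < m" for i j
    using that A'sym unfolding A3_def by simp
  obtain U3 \<mu>3 where U3: "U3 \<in> carrier_mat m m" and U3U3: "transpose_mat U3 * U3 = 1\<^sub>m m"
    and U3A: "transpose_mat U3 * A3 * U3 = mat m m (\<lambda>(i,j). if i = j then \<mu>3 i else 0)"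
    using Suc.IH[OF A3 A3sym] by blast
  define F where "F = mat ?n ?n (\<lambda>(i,j). if i = 0 then (if j = 0 then 1 else 0)
      else if j = 0 then 0 else U3$$(i-1,j-1))"
  have F: "F \<in> carrier_mat ?n ?n" unfolding F_def by simp
  have F00: "F$$(0,0) = 1" and F0S: "j < m \<Longrightarrow> F$$(0,Suc j) = 0"
    and FS0: "i < m \<Longrightarrow> F$$(Suc i,0) = 0" and FSS: "i < m \<Longrightarrow> j < m \<Longrightarrow> F$$(Suc i,Suc j) = U3$$(i,j)"
    for i j unfolding F_def by auto
  define \<mu> where "\<mu> i = (if i = 0 then e else \<mu>3 (i - 1))" for i
  have U3e: "(\<Sum>k<m. U3$$(k,i) * U3$$(k,j)) = (if i = j then 1 else 0)" if "i < m" "j < m" for i j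
  proof -
    have "(transpose_mat U3 * U3)$$(i,j) = (\<Sum>k<m. U3$$(k,i) * U3$$(k,j))"
      by (rule transp_entry[OF U3 U3 that])
    then show ?thesis using U3U3 that by simp
  qed
  have U3Ae: "(\<Sum>l<m. (\<Sum>k<m. U3$$(k,i) * A3$$(k,l)) * U3$$(l,j)) = (if i = j then \<mu>3 i else 0)"
    if "i < m" "j < m" for i j
  proof -
    have "(transpose_mat U3 * A3 * U3)$$(i,j) = (\<Sum>l<m. (\<Sum>k<m. U3$$(k,i) * A3$$(k,l)) * U3$$(l,j))"
      by (rule triple_entry[OF U3 A3 that])
    then show ?thesis using U3A that by simp
  qed
  have FF: "transpose_mat F * F = 1\<^sub>m ?n"
  proof (rule eq_matI)
    fix i j assume "i < dim_row (1\<^sub>m ?n :: real mat)" "j < dim_col (1\<^sub>m ?n :: real mat)"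
    then have i: "i < ?n" and j: "j < ?n" by auto
    have "(transpose_mat F * F)$$(i,j) = (\<Sum>k<?n. F$$(k,i) * F$$(k,j))"
      by (rule transp_entry[OF F F i j])
    also have "\<dots> = F$$(0,i) * F$$(0,j) + (\<Sum>k<m. F$$(Suc k,i) * F$$(Suc k,j))"
      by (subst sum.lessThan_Suc_shift) simp
    also have "\<dots> = 1\<^sub>m ?n $$ (i,j)"
    proof (cases i; cases j)
      assume "i = 0" "j = 0" then show ?thesis by (simp add: F00 FS0)
    next
      fix j' assume "i = 0" "j = Suc j'" then show ?thesis using j by (simp add: F0S FS0)
    next
      fix i' assume "i = Suc i'" "j = 0" then show ?thesis using i by (simp add: F0S FS0)
    next
      fix i' j' assume "i = Suc i'" "j = Suc j'" then show ?thesis using i j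
        by (simp add: F0S FSS U3e)
    qed
    finally show "(transpose_mat F * F)$$(i,j) = 1\<^sub>m ?n $$ (i,j)" .
  qed (use F in auto)
  have FAF: "transpose_mat F * A' * F = mat ?n ?n (\<lambda>(i,j). if i = j then \<mu> i else 0)"
  proof (rule eq_matI)
    fix i j assume "i < dim_row (mat ?n ?n (\<lambda>(i,j). if i = j then \<mu> i else 0))"
      "j < dim_col (mat ?n ?n (\<lambda>(i,j). if i = j then \<mu> i else 0))"
    then have i: "i < ?n" and j: "j < ?n" by auto
    define G where "G i l = (\<Sum>k<?n. F$$(k,i) * A'$$(k,l))" for i l
    have "(transpose_mat F * A' * F)$$(i,j) = (\<Sum>l<?n. G i l * F$$(l,j))"
      unfolding G_def by (rule triple_entry[OF F A' i j])
    also have "\<dots> = G i 0 * F$$(0,j) + (\<Sum>l<m. G i (Suc l) * F$$(Suc l,j))"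
      by (subst sum.lessThan_Suc_shift) simp
    also have "\<dots> = (if i = j then \<mu> i else 0)"
    proof -
      have G0: "G 0 l = A'$$(0,l)" for l
        unfolding G_def by (subst sum.lessThan_Suc_shift) (simp add: F00 FS0)
      have GS: "G (Suc i') l = (\<Sum>k<m. U3$$(k,i') * A'$$(Suc k,l))" if "i' < m" for i' l
        unfolding G_def using that by (subst sum.lessThan_Suc_shift) (simp add: F0S FSS)
      show ?thesis
      proof (cases i; cases j)
        assume "i = 0" "j = 0" then show ?thesis by (simp add: F00 FS0 G0 A'0 \<mu>_def)
      next
        fix j' assume "i = 0" "j = Suc j'" then show ?thesis using j
          by (simp add: F0S FSS G0 A'sym[of 0] A'0)
      next
        fix i' assume "i = Suc i'" "j = 0" then show ?thesis using i
          by (simp add: F00 FS0 GS A'0)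
      next
        fix i' j' assume ij: "i = Suc i'" "j = Suc j'"
        have "(\<Sum>l<m. G i (Suc l) * F$$(Suc l,j)) = (\<Sum>l<m. (\<Sum>k<m. U3$$(k,i') * A3$$(k,l)) * U3$$(l,j'))"
          using ij i j by (intro sum.cong refl) (simp add: GS FSS A3_def)
        then show ?thesis using ij i j by (simp add: F0S U3Ae \<mu>_def)
      qed
    qed
    finally show "(transpose_mat F * A' * F)$$(i,j) = mat ?n ?n (\<lambda>(i,j). if i = j then \<mu> i else 0) $$ (i,j)"
      using i j by simp
  qed (use F in auto)
  have U: "H * F \<in> carrier_mat ?n ?n" using H F by simp
  have UT: "transpose_mat (H * F) = transpose_mat F * H"
    using transpose_mult[OF H F] HT by simp
  have FT: "transpose_mat F \<in> carrier_mat ?n ?n" using F by simp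
  have "transpose_mat (H * F) * (H * F) = transpose_mat F * H * (H * F)" by (simp only: UT)
  also have "\<dots> = transpose_mat F * (H * (H * F))" by (rule assoc_mult_mat[OF FT H U])
  also have "H * (H * F) = H * H * F" by (rule assoc_mult_mat[symmetric, OF H H F])
  also have "\<dots> = F" using HH F by simp
  finally have UU: "transpose_mat (H * F) * (H * F) = 1\<^sub>m ?n" using FF by simp
  have "transpose_mat (H * F) * A * (H * F) = transpose_mat F * H * A * (H * F)" by (simp only: UT)
  also have "\<dots> = transpose_mat F * (H * A * (H * F))"
    using FT H A F by (simp add: assoc_mult_mat[of _ ?n ?n _ ?n _ ?n])
  also have "H * A * (H * F) = A' * F"
    unfolding A'_def using H A F by (simp add: assoc_mult_mat[of _ ?n ?n _ ?n _ ?n])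
  also have "transpose_mat F * (A' * F) = transpose_mat F * A' * F"
    by (rule assoc_mult_mat[symmetric, OF FT A' F])
  finally have "transpose_mat (H * F) * A * (H * F) = mat ?n ?n (\<lambda>(i,j). if i = j then \<mu> i else 0)"
    using FAF by simp
  with U UU show ?case by blast
qed

lemma sp_sum: "v \<in> carrier_vec n \<Longrightarrow> w \<in> carrier_vec n \<Longrightarrow> v \<bullet> w = (\<Sum>i<n. v$i * w$i)"
  by (simp add: scalar_prod_def lessThan_atLeast0)

lemma adjoint_sp:
  fixes M :: "real mat"
  assumes x: "x \<in> carrier_vec nr" and M: "M \<in> carrier_mat nr nc" and q: "q \<in> carrier_vec nc"
  shows "x \<bullet> (M *\<^sub>v q) = (transpose_mat M *\<^sub>v x) \<bullet> q"
proof -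
  have "x \<bullet> (M *\<^sub>v q) = (\<Sum>i<nr. x$i * (\<Sum>j<nc. M$$(i,j) * q$j))"
    using x M q by (simp add: sp_sum[of _ nr] sp_sum[of _ nc] row_def)
  also have "\<dots> = (\<Sum>i<nr. \<Sum>j<nc. x$i * M$$(i,j) * q$j)"
    by (simp add: sum_distrib_left mult.assoc)
  also have "\<dots> = (\<Sum>j<nc. \<Sum>i<nr. x$i * M$$(i,j) * q$j)" by (rule sum.swap)
  also have "\<dots> = (\<Sum>j<nc. (\<Sum>i<nr. M$$(i,j) * x$i) * q$j)"
    by (simp add: sum_distrib_right sum_distrib_left mult_ac)
  also have "\<dots> = (transpose_mat M *\<^sub>v x) \<bullet> q"
    using x M q by (simp add: sp_sum[of _ nc] sp_sum[of _ nr] row_def)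
  finally show ?thesis .
qed

lemma quad_forms:
  fixes A U :: "real mat"
  assumes A: "A \<in> carrier_mat n n" and U: "U \<in> carrier_mat n n" and UU: "transpose_mat U * U = 1\<^sub>m n"
    and UAU: "transpose_mat U * A * U = mat n n (\<lambda>(i,j). if i = j then \<mu> i else 0)"
    and x: "x \<in> carrier_vec n" and y: "y \<in> carrier_vec n"
  shows "transpose_mat U *\<^sub>v (A *\<^sub>v x) = vec n (\<lambda>i. \<mu> i * (transpose_mat U *\<^sub>v x)$i)"
    and "x \<bullet> (A *\<^sub>v x) = (\<Sum>i<n. \<mu> i * ((transpose_mat U *\<^sub>v x)$i)^2)"
    and "(A *\<^sub>v x) \<bullet> (A *\<^sub>v x) = (\<Sum>i<n. (\<mu> i)^2 * ((transpose_mat U *\<^sub>v x)$i)^2)"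
    and "x \<bullet> y = (\<Sum>i<n. (transpose_mat U *\<^sub>v x)$i * (transpose_mat U *\<^sub>v y)$i)"
proof -
  define Ut where "Ut = transpose_mat U"
  define D where "D = mat n n (\<lambda>(i,j). if i = j then \<mu> i else (0::real))"
  have Ut: "Ut \<in> carrier_mat n n" unfolding Ut_def using U by simp
  have D: "D \<in> carrier_mat n n" unfolding D_def by simp
  have UUt: "U * Ut = 1\<^sub>m n" using mat_mult_left_right_inverse[OF Ut U] UU unfolding Ut_def by simp
  define z where "z = Ut *\<^sub>v x"
  have z: "z \<in> carrier_vec n" unfolding z_def using Ut x by simp
  have Dz: "D *\<^sub>v z = vec n (\<lambda>i. \<mu> i * z$i)"
  proof (rule eq_vecI)
    fix i assume "i < dim_vec (vec n (\<lambda>i. \<mu> i * z$i))"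
    then have i: "i < n" by simp
    have "(D *\<^sub>v z)$i = (\<Sum>j<n. D$$(i,j) * z$j)"
      using i D z by (simp add: sp_sum[of _ n] row_def)
    also have "\<dots> = (\<Sum>j<n. (if j = i then 1 else 0) * (\<mu> i * z$j))"
      by (rule sum.cong) (auto simp: D_def i)
    also have "\<dots> = \<mu> i * z$i" by (rule sum_delta_right[OF i])
    finally show "(D *\<^sub>v z)$i = vec n (\<lambda>i. \<mu> i * z$i) $ i" using i by simp
  qed (use D in simp)
  have UtAx: "Ut *\<^sub>v (A *\<^sub>v x) = D *\<^sub>v z"
  proof -
    have "Ut *\<^sub>v (A *\<^sub>v x) = (Ut * A) *\<^sub>v x" using Ut A x by simp
    also have "Ut * A = Ut * A * (U * Ut)" using Ut A UUt by simp
    also have "\<dots> = (Ut * A * U) * Ut" using Ut A U by (simp add: assoc_mult_mat[of _ n n _ n _ n])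
    also have "Ut * A * U = D" using UAU unfolding Ut_def D_def .
    also have "D * Ut *\<^sub>v x = D *\<^sub>v z" unfolding z_def using D Ut x by simp
    finally show ?thesis .
  qed
  show "transpose_mat U *\<^sub>v (A *\<^sub>v x) = vec n (\<lambda>i. \<mu> i * (transpose_mat U *\<^sub>v x)$i)"
    using UtAx Dz unfolding z_def Ut_def by simp
  have backU: "vv = U *\<^sub>v (Ut *\<^sub>v vv)" if vv: "vv \<in> carrier_vec n" for vv
  proof -
    have "U *\<^sub>v (Ut *\<^sub>v vv) = (U * Ut) *\<^sub>v vv" using U Ut vv by simp
    then show ?thesis using UUt vv by simp
  qed
  have Ax: "A *\<^sub>v x \<in> carrier_vec n" using A x by simp
  have Dzc: "D *\<^sub>v z \<in> carrier_vec n" using D z by simp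
  have "x \<bullet> (A *\<^sub>v x) = x \<bullet> (U *\<^sub>v (D *\<^sub>v z))" using backU[OF Ax] UtAx by simp
  also have "\<dots> = z \<bullet> (D *\<^sub>v z)" using adjoint_sp[OF x U Dzc] unfolding z_def Ut_def .
  also have "\<dots> = (\<Sum>i<n. \<mu> i * (z$i)^2)" using z Dzc by (simp add: sp_sum[of _ n] Dz power2_eq_square mult_ac)
  finally show "x \<bullet> (A *\<^sub>v x) = (\<Sum>i<n. \<mu> i * ((transpose_mat U *\<^sub>v x)$i)^2)" unfolding z_def Ut_def .
  have "(A *\<^sub>v x) \<bullet> (A *\<^sub>v x) = (U *\<^sub>v (D *\<^sub>v z)) \<bullet> (U *\<^sub>v (D *\<^sub>v z))" using backU[OF Ax] UtAx by simp
  also have "\<dots> = (Ut *\<^sub>v (U *\<^sub>v (D *\<^sub>v z))) \<bullet> (D *\<^sub>v z)"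
    unfolding Ut_def by (rule adjoint_sp) (use U Dzc in simp_all)
  also have "Ut *\<^sub>v (U *\<^sub>v (D *\<^sub>v z)) = D *\<^sub>v z"
  proof -
    have "Ut *\<^sub>v (U *\<^sub>v (D *\<^sub>v z)) = (Ut * U) *\<^sub>v (D *\<^sub>v z)" using Ut U Dzc by simp
    then show ?thesis using UU Dzc unfolding Ut_def by simp
  qed
  also have "(D *\<^sub>v z) \<bullet> (D *\<^sub>v z) = (\<Sum>i<n. (\<mu> i)^2 * (z$i)^2)"
    using Dzc by (simp add: sp_sum[of _ n] Dz power2_eq_square mult_ac)
  finally show "(A *\<^sub>v x) \<bullet> (A *\<^sub>v x) = (\<Sum>i<n. (\<mu> i)^2 * ((transpose_mat U *\<^sub>v x)$i)^2)"
    unfolding z_def Ut_def .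
  have Uty: "Ut *\<^sub>v y \<in> carrier_vec n" using Ut y by simp
  have "x \<bullet> y = x \<bullet> (U *\<^sub>v (Ut *\<^sub>v y))" using backU[OF y] by simp
  also have "\<dots> = (Ut *\<^sub>v x) \<bullet> (Ut *\<^sub>v y)" unfolding Ut_def by (rule adjoint_sp[OF x U]) (use Uty Ut_def in simp)
  also have "\<dots> = (\<Sum>i<n. (Ut *\<^sub>v x)$i * (Ut *\<^sub>v y)$i)" using Ut x Uty by (simp add: sp_sum[of _ n])
  finally show "x \<bullet> y = (\<Sum>i<n. (transpose_mat U *\<^sub>v x)$i * (transpose_mat U *\<^sub>v y)$i)" unfolding Ut_def .
qed

lemma final_arith:
  fixes d lam x y k :: real
  assumes "0 \<le> lam" "2*lam < d" "0 < x" "x \<le> 1" "k = (d+lam)*x + lam" "k - 2*lam \<le> y" "y \<le> d"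
  shows "(d-y)*(y+d-k) \<le> (d^2-lam^2)*(1-x)"
proof (cases "k \<le> 4*lam")
  case True
  have "4*((d-y)*(y+d-k)) \<le> (2*d-k)^2"
    using sum_squares_ge_zero[of "(d-y)-(y+d-k)" 0] by (simp add: power2_eq_square algebra_simps)
  moreover have "k^2 \<le> 4*lam*k" using True assms by (simp add: power2_eq_square mult_right_mono)
  moreover have "k \<le> d*(1+x) - lam*(1-x)" using assms by (simp add: algebra_simps)
  then have "4*lam*k \<le> 4*lam*(d*(1+x) - lam*(1-x))" using assms by (intro mult_left_mono) auto
  moreover have "(2*d-k)^2 - 4*((d^2-lam^2)*(1-x)) = k^2 - 4*lam*(d*(1+x) - lam*(1-x))"
    using assms(5) by (simp add: algebra_simps power2_eq_square)
  ultimately show ?thesis by linarith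
next
  case False
  define y0 where "y0 = k - 2*lam"
  have "(d-y)*(y+d-k) - (d-y0)*(y0+d-k) = (y-y0)*(k-y-y0)" by (simp add: algebra_simps)
  moreover have "(y-y0)*(k-y-y0) \<le> 0"
    using False assms unfolding y0_def by (intro mult_nonneg_nonpos) auto
  moreover have "(d-y0)*(y0+d-k) = (d+lam)*(1-x)*(d-2*lam)" unfolding y0_def using assms by (simp add: algebra_simps)
  moreover have "(d+lam)*(1-x)*(d-2*lam) \<le> (d+lam)*(1-x)*(d-lam)"
    using assms by (intro mult_left_mono) auto
  moreover have "(d+lam)*(1-x)*(d-lam) = (d^2-lam^2)*(1-x)" by (simp add: algebra_simps power2_eq_square)
  ultimately show ?thesis by linarith
qed

lemma cross_edge:
  assumes "(x, y) \<in> {(a, b). E a b}\<^sup>*" "x \<in> S" "y \<notin> S"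
  shows "\<exists>a b. E a b \<and> a \<in> S \<and> b \<notin> S"
  using assms
proof (induction rule: rtrancl_induct)
  case base
  then show ?case by simp
next
  case (step y z)
  show ?case
  proof (cases "y \<in> S")
    case True
    then show ?thesis using step by auto
  next
    case False
    then show ?thesis using step by auto
  qed
qed

lemma proots_lin: "proots (\<Prod>a\<leftarrow>xs. [:- a, 1:]) = mset (xs :: real list)"
proof (induction xs)
  case Nil
  then show ?case by simp
next
  case (Cons x xs)
  have nz: "(\<Prod>a\<leftarrow>xs. [:- a, 1:]) \<noteq> (0 :: real poly)"
    by (auto simp: prod_list_zero_iff image_iff)
  have eq: "(\<Prod>a\<leftarrow>x#xs. [:- a, 1:]) = [:- x, 1:] * (\<Prod>a\<leftarrow>xs. [:- a, 1:])" by simp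
  have "proots (\<Prod>a\<leftarrow>x # xs. [:- a, 1:]) = proots [:- x, 1:] + proots (\<Prod>a\<leftarrow>xs. [:- a, 1:])"
    unfolding eq by (rule proots_mult[OF _ nz]) simp
  also have "proots [:- x, 1:] = {#x#}" using proots_linear_factor[of "- x"] by simp
  also have "proots (\<Prod>a\<leftarrow>xs. [:- a, 1:]) = mset xs" by (rule Cons.IH)
  finally show ?case by simp
qed

lemma adj_eigs_mset:
  fixes E :: "nat \<Rightarrow> nat \<Rightarrow> bool"
  assumes U: "U \<in> carrier_mat n n" and UU: "transpose_mat U * U = 1\<^sub>m n"
    and UAU: "transpose_mat U * adj_mat n E * U = mat n n (\<lambda>(i,j). if i = j then \<mu> i else 0)"
  shows "mset (adj_eigs n E) = mset (map \<mu> [0..<n])"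
    and "char_poly (adj_mat n E) = (\<Prod>a\<leftarrow>map \<mu> [0..<n]. [:- a, 1:])"
proof -
  define A where "A = adj_mat n E"
  define D where "D = mat n n (\<lambda>(i,j). if i = j then \<mu> i else (0::real))"
  define Ut where "Ut = transpose_mat U"
  have A: "A \<in> carrier_mat n n" unfolding A_def adj_mat_def by simp
  have D: "D \<in> carrier_mat n n" unfolding D_def by simp
  have Ut: "Ut \<in> carrier_mat n n" unfolding Ut_def using U by simp
  have UUt: "U * Ut = 1\<^sub>m n" using mat_mult_left_right_inverse[OF Ut U] UU unfolding Ut_def by simp
  have "U * D * Ut = U * (Ut * A * U) * Ut" using UAU unfolding D_def Ut_def A_def by simp
  also have "\<dots> = (U * Ut) * A * (U * Ut)"
    using U Ut A by (simp add: assoc_mult_mat[of _ n n _ n _ n])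
  also have "\<dots> = A" using UUt A by simp
  finally have ADU: "A = U * D * Ut" by simp
  have "similar_mat_wit A D U Ut"
    unfolding similar_mat_wit_def Let_def using A D U Ut UUt UU ADU unfolding Ut_def by auto
  then have "similar_mat A D" unfolding similar_mat_def by blast
  then have "char_poly A = char_poly D" by (rule char_poly_similar)
  also have "char_poly D = (\<Prod>a\<leftarrow>diag_mat D. [:- a, 1:])"
    by (rule char_poly_upper_triangular[OF D]) (auto simp: D_def upper_triangular_def)
  also have "diag_mat D = map \<mu> [0..<n]" unfolding D_def diag_mat_def by (simp cong: map_cong)
  finally have cp: "char_poly A = (\<Prod>a\<leftarrow>map \<mu> [0..<n]. [:- a, 1:])" .
  then show "char_poly (adj_mat n E) = (\<Prod>a\<leftarrow>map \<mu> [0..<n]. [:- a, 1:])" unfolding A_def .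
  show "mset (adj_eigs n E) = mset (map \<mu> [0..<n])"
  proof -
    have "mset (adj_eigs n E) = proots (char_poly A)"
      unfolding adj_eigs_def A_def by (simp only: mset_rev mset_sorted_list_of_multiset)
    also have "\<dots> = mset (map \<mu> [0..<n])" unfolding cp by (rule proots_lin)
    finally show ?thesis .
  qed
qed

theorem mainTheorem4:
  fixes n d t :: nat and E :: "nat \<Rightarrow> nat \<Rightarrow> bool" and lam :: real
    and vs :: "nat \<Rightarrow> nat" and B W :: "nat set"
  assumes "ndl_graph n E d lam"
    and "connected_graph n E"
    and "t \<ge> 2"
    and "\<forall>i\<in>{1..t-1}. vs i < n"
    and "B = (\<Union>i\<in>{1..t-1}. cl_nbhd n E (vs i))"
    and "W = {0..<n} - B"
    and "real (card W) > lam / (real d + lam) * real n"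
  shows "\<exists>u\<in>B. 1 \<le> card (nbhd n E u \<inter> W) \<and>
           real (card (nbhd n E u \<inter> W)) \<le> (real d + lam) * real (card W) / real n + lam"
proof (rule ccontr)
  assume contra: "\<not> (\<exists>u\<in>B. 1 \<le> card (nbhd n E u \<inter> W) \<and>
           real (card (nbhd n E u \<inter> W)) \<le> (real d + lam) * real (card W) / real n + lam)"
  have simple: "simple_graph n E" and reg: "regular n E d" and lam0: "0 \<le> lam"
    and eig: "\<And>i. 1 \<le> i \<Longrightarrow> i < length (adj_eigs n E) \<Longrightarrow> \<bar>adj_eigs n E ! i\<bar> \<le> lam"
    using assms(1) unfolding ndl_graph_def by auto
  have Eprop: "u < n" "v < n" "E v u" if "E u v" for u v
    using simple that unfolding simple_graph_def by auto
  have Esym: "E u v = E v u" for u v using Eprop by blast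
  have nbsub: "nbhd n E u \<subseteq> {0..<n}" for u unfolding nbhd_def by auto
  have finnb: "finite (nbhd n E u)" for u using nbsub finite_subset by blast
  have degu: "card (nbhd n E u) = d" if "u < n" for u using reg that unfolding regular_def by auto
  have Bsub: "B \<subseteq> {0..<n}"
    using assms(4,5) nbsub unfolding cl_nbhd_def by auto
  have Wdef: "W = {0..<n} - B" by (rule assms(6))
  have Wsub: "W \<subseteq> {0..<n}" using Wdef by auto
  have BW: "B \<inter> W = {}" "B \<union> W = {0..<n}" using Wdef Bsub by auto
  have finB: "finite B" and finW: "finite W" using Bsub Wsub finite_subset by auto
  have b1: "vs 1 \<in> B" using assms(3,5) unfolding cl_nbhd_def by auto
  define w where "w = real (card W)"
  have "0 \<le> lam / (real d + lam) * real n" using lam0 by simp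
  then have wpos: "0 < w" using assms(7) unfolding w_def by linarith
  then obtain w0 where w0: "w0 \<in> W" unfolding w_def by (metis card.empty less_irrefl of_nat_0 ex_in_conv)
  have npos: "0 < n" using w0 Wsub by auto
  have wle: "w \<le> real n" unfolding w_def using card_mono[OF _ Wsub] by simp
  define g where "g u = card (nbhd n E u \<inter> W)" for u
  have gle: "g u \<le> d" if "u < n" for u
    unfolding g_def using card_mono[OF finnb, of "nbhd n E u \<inter> W" u] degu[OF that] by auto
  obtain u0 where u0: "u0 \<in> B" "1 \<le> g u0"
  proof -
    have "vs 1 < n" "w0 < n" using b1 w0 Bsub Wsub by auto
    then have "(vs 1, w0) \<in> {(x, y). E x y}\<^sup>*"
      using assms(2) unfolding connected_graph_def by blast
    from cross_edge[OF this b1] obtain a b where ab: "E a b" "a \<in> B" "b \<notin> B"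
      using w0 BW by auto
    have "b \<in> nbhd n E a \<inter> W" using ab Eprop[OF ab(1)] Wdef unfolding nbhd_def by auto
    then have "1 \<le> g a" unfolding g_def using finnb
      by (metis Int_iff card_0_eq empty_iff finite_Int less_one not_le)
    then show ?thesis using that ab by blast
  qed
  define k where "k = (real d + lam) * w / real n + lam"
  have big: "real (g u) > k" if "u \<in> B" "1 \<le> g u" for u
    using contra that unfolding g_def k_def w_def by auto
  have kd: "k < real d" using big[OF u0] gle[of u0] u0 Bsub by force
  have "0 \<le> (real d + lam) * w / real n" using lam0 wpos by simp
  then have k0: "0 \<le> k" using lam0 unfolding k_def by simp
  then have d0: "0 < real d" using kd by simp
  have dl: "0 < real d + lam" using d0 lam0 by simp
  have "lam < (real d + lam) * w / real n"
  proof -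
    have "lam / (real d + lam) * real n < w" using assms(7) unfolding w_def by simp
    then have "lam * real n < w * (real d + lam)" using dl by (simp add: field_simps)
    then show ?thesis using npos by (simp add: field_simps)
  qed
  then have lam2: "2 * lam < real d" using kd unfolding k_def by simp
  define A where "A = adj_mat n E"
  have A: "A \<in> carrier_mat n n" unfolding A_def adj_mat_def by simp
  have Aij: "A$$(i,j) = (if E i j then 1 else 0)" if "i < n" "j < n" for i j
    using that unfolding A_def adj_mat_def by simp
  have Asym: "A$$(i,j) = A$$(j,i)" if "i < n" "j < n" for i j
    using that Esym[of i j] by (simp add: Aij)
  obtain U \<mu> where U: "U \<in> carrier_mat n n" and UU: "transpose_mat U * U = 1\<^sub>m n"
    and UAU: "transpose_mat U * A * U = mat n n (\<lambda>(i,j). if i = j then \<mu> i else 0)"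
    using spectral[OF A Asym] by blast
  define L where "L = adj_eigs n E"
  define xs where "xs = map \<mu> [0..<n]"
  have mL: "mset L = mset xs" unfolding L_def xs_def using adj_eigs_mset(1)[OF U UU UAU[unfolded A_def]] .
  have cpA: "char_poly A = (\<Prod>a\<leftarrow>xs. [:- a, 1:])"
    unfolding A_def xs_def using adj_eigs_mset(2)[OF U UU UAU[unfolded A_def]] .
  have Av: "(A *\<^sub>v v) $ u = (\<Sum>j\<in>nbhd n E u. v$j)" if "u < n" "v \<in> carrier_vec n" for u v
  proof -
    have "(A *\<^sub>v v) $ u = (\<Sum>j<n. A$$(u,j) * v$j)"
      using that A by (simp add: sp_sum[of _ n] row_def)
    also have "\<dots> = (\<Sum>j<n. if E u j then v$j else 0)"
      by (rule sum.cong) (use that in \<open>auto simp: Aij\<close>)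
    also have "\<dots> = (\<Sum>j\<in>{j\<in>{..<n}. E u j}. v$j)" by (rule sum.inter_filter[symmetric]) simp
    also have "{j\<in>{..<n}. E u j} = nbhd n E u" unfolding nbhd_def by auto
    finally show ?thesis .
  qed
  define one where "one = vec n (\<lambda>_. 1::real)"
  define f where "f = vec n (\<lambda>i. if i \<in> W then 1 else (0::real))"
  have one: "one \<in> carrier_vec n" and f: "f \<in> carrier_vec n" unfolding one_def f_def by auto
  have Aone: "A *\<^sub>v one = real d \<cdot>\<^sub>v one"
  proof (rule eq_vecI)
    fix u assume "u < dim_vec (real d \<cdot>\<^sub>v one)"
    then have u: "u < n" unfolding one_def by simp
    have "(A *\<^sub>v one) $ u = (\<Sum>j\<in>nbhd n E u. one$j)" by (rule Av[OF u one])
    also have "\<dots> = (\<Sum>j\<in>nbhd n E u. 1)" by (rule sum.cong) (auto simp: one_def nbhd_def)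
    also have "\<dots> = real d" using degu[OF u] by simp
    finally show "(A *\<^sub>v one) $ u = (real d \<cdot>\<^sub>v one) $ u" using u unfolding one_def by simp
  qed (use A one_def in simp)
  have Af: "(A *\<^sub>v f) $ u = real (g u)" if u: "u < n" for u
  proof -
    have "(A *\<^sub>v f) $ u = (\<Sum>j\<in>nbhd n E u. f$j)" by (rule Av[OF u f])
    also have "\<dots> = (\<Sum>j\<in>nbhd n E u. if j \<in> W then 1 else 0)"
      by (rule sum.cong) (auto simp: f_def nbhd_def)
    also have "\<dots> = (\<Sum>j\<in>nbhd n E u \<inter> W. 1)" by (rule sum.inter_restrict[symmetric, OF finnb])
    also have "\<dots> = real (g u)" unfolding g_def by simp
    finally show ?thesis .
  qed
  have "eigenvector A one (real d)"
    unfolding eigenvector_def using A one Aone npos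
    by (auto simp: one_def dest!: arg_cong[of _ _ "\<lambda>v. v $ 0"])
  then have "eigenvalue A (real d)" unfolding eigenvalue_def by blast
  then have "poly (char_poly A) (real d) = 0" using eigenvalue_root_char_poly[OF A] by simp
  moreover have "char_poly A \<noteq> 0" unfolding cpA by (auto simp: prod_list_zero_iff image_iff)
  ultimately have "real d \<in># proots (char_poly A)" by simp
  then have dxs: "real d \<in> set xs" unfolding cpA proots_lin by simp
  then have "real d \<in> set L" using mL by (metis set_mset_mset)
  then obtain j where j: "j < length L" "L ! j = real d" by (auto simp: in_set_conv_nth)
  have j0: "j = 0"
  proof (rule ccontr)
    assume "j \<noteq> 0"
    then have "\<bar>L ! j\<bar> \<le> lam" using eig[of j] j unfolding L_def by auto
    then show False using j lam2 lam0 by auto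
  qed
  have Lne: "L \<noteq> []" using j by auto
  have Lcons: "L = real d # tl L" using j j0 Lne by (cases L) auto
  obtain i0 where i0: "i0 < n" "\<mu> i0 = real d" using dxs unfolding xs_def by auto
  define ys where "ys = take i0 xs @ drop (Suc i0) xs"
  have "mset xs = add_mset (real d) (mset ys)"
  proof -
    have "xs = take i0 xs @ xs ! i0 # drop (Suc i0) xs"
      by (rule id_take_nth_drop) (use i0 in \<open>simp add: xs_def\<close>)
    then have "mset xs = mset (take i0 xs @ xs ! i0 # drop (Suc i0) xs)" by simp
    also have "\<dots> = add_mset (xs ! i0) (mset ys)" unfolding ys_def by simp
    finally show ?thesis using i0 unfolding xs_def by simp
  qed
  moreover have "mset L = add_mset (real d) (mset (tl L))" by (subst Lcons) simp
  ultimately have mtl: "mset (tl L) = mset ys" using mL by simp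
  have mub: "\<bar>\<mu> i\<bar> \<le> lam" if "i < n" "i \<noteq> i0" for i
  proof -
    have "\<mu> i \<in> set ys"
    proof (cases "i < i0")
      case True
      then have "take i0 xs ! i = \<mu> i" using that unfolding xs_def by simp
      moreover have "i < length (take i0 xs)" using True that i0 unfolding xs_def by simp
      ultimately show ?thesis unfolding ys_def by (metis in_set_conv_nth Un_iff set_append)
    next
      case False
      then have "i0 < i" using that by simp
      then have "drop (Suc i0) xs ! (i - Suc i0) = \<mu> i" using that unfolding xs_def by simp
      moreover have "i - Suc i0 < length (drop (Suc i0) xs)" using \<open>i0 < i\<close> that unfolding xs_def by simp
      ultimately show ?thesis unfolding ys_def by (metis in_set_conv_nth Un_iff set_append)
    qed
    then have "\<mu> i \<in> set (tl L)" using mtl by (metis set_mset_mset)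
    then obtain j' where j': "j' < length (tl L)" "tl L ! j' = \<mu> i" by (auto simp: in_set_conv_nth)
    then have "L ! Suc j' = \<mu> i" "Suc j' < length L" using Lne by (auto simp: nth_tl)
    then show ?thesis using eig[of "Suc j'"] unfolding L_def by auto
  qed
  have mud: "\<mu> i \<noteq> real d" if "i < n" "i \<noteq> i0" for i using mub[OF that] lam2 lam0 by auto
  define Ut where "Ut = transpose_mat U"
  have Ut: "Ut \<in> carrier_mat n n" unfolding Ut_def using U by simp
  define z where "z = Ut *\<^sub>v f"
  define z1 where "z1 = Ut *\<^sub>v one"
  note QF1 = quad_forms[OF A U UU UAU one one, folded Ut_def, folded z1_def]
  note QF2 = quad_forms[OF A U UU UAU f one, folded Ut_def, folded z_def z1_def]
  note QF3 = quad_forms[OF A U UU UAU f f, folded Ut_def, folded z_def]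
  have "Ut *\<^sub>v (A *\<^sub>v one) = real d \<cdot>\<^sub>v z1" unfolding Aone z1_def using Ut one by (simp add: mult_mat_vec)
  then have eqv: "real d \<cdot>\<^sub>v z1 = vec n (\<lambda>i. \<mu> i * z1$i)" using QF1(1) by simp
  have z1c: "z1 \<in> carrier_vec n" unfolding z1_def using Ut one by simp
  have "\<mu> i * z1$i = real d * z1$i" if "i < n" for i
  proof -
    have "(real d \<cdot>\<^sub>v z1)$i = (vec n (\<lambda>i. \<mu> i * z1$i))$i" using eqv by simp
    then show ?thesis using that z1c by auto
  qed
  then have z1z: "z1$i = 0" if "i < n" "i \<noteq> i0" for i using mud[OF that] that by auto
  have sum_single: "(\<Sum>i<n. h i) = h i0" if "\<And>i. i < n \<Longrightarrow> i \<noteq> i0 \<Longrightarrow> h i = 0" for h :: "nat \<Rightarrow> real"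
  proof -
    have "(\<Sum>i<n. h i) = (\<Sum>i<n. if i = i0 then h i0 else 0)" by (rule sum.cong) (use that in auto)
    also have "\<dots> = h i0" using i0 by simp
    finally show ?thesis .
  qed
  have "one \<bullet> one = real n" using one by (simp add: sp_sum[of _ n] one_def)
  then have z1n: "(z1$i0)^2 = real n" using QF1(4) sum_single[of "\<lambda>i. z1$i * z1$i"] z1z
    by (simp add: power2_eq_square)
  have fone: "f \<bullet> one = w"
  proof -
    have "f \<bullet> one = (\<Sum>i<n. if i \<in> W then 1 else 0)" using f one by (simp add: sp_sum[of _ n] f_def one_def)
    also have "\<dots> = (\<Sum>i\<in>{..<n} \<inter> W. 1)" by (rule sum.inter_restrict[symmetric]) simp
    also have "{..<n} \<inter> W = W" using Wsub by auto
    finally show ?thesis unfolding w_def by simp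
  qed
  have ff: "f \<bullet> f = w"
  proof -
    have "f \<bullet> f = (\<Sum>i<n. if i \<in> W then 1 else 0)" unfolding sp_sum[OF f f]
      by (intro sum.cong) (auto simp: f_def)
    also have "\<dots> = (\<Sum>i\<in>{..<n} \<inter> W. 1)" by (rule sum.inter_restrict[symmetric]) simp
    also have "{..<n} \<inter> W = W" using Wsub by auto
    finally show ?thesis unfolding w_def by simp
  qed
  have "w = z$i0 * z1$i0" using fone QF2(4) sum_single[of "\<lambda>i. z$i * z1$i"] z1z by simp
  then have "w^2 = (z$i0)^2 * (z1$i0)^2" by (simp add: power_mult_distrib)
  then have z0: "(z$i0)^2 = w * (w / real n)" using z1n npos by (simp add: field_simps power2_eq_square)
  define S' where "S' = (\<Sum>i\<in>{..<n} - {i0}. (z$i)^2)"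
  have i0m: "i0 \<in> {..<n}" using i0 by simp
  have "w = (\<Sum>i<n. (z$i)^2)" using ff QF3(4) by (simp add: power2_eq_square)
  then have wS: "w = (z$i0)^2 + S'" unfolding S'_def using sum.remove[OF _ i0m, of "\<lambda>i. (z$i)^2"] by simp
  define Q where "Q = f \<bullet> (A *\<^sub>v f)"
  define R where "R = (A *\<^sub>v f) \<bullet> (A *\<^sub>v f)"
  have Qlow: "Q \<ge> real d * (z$i0)^2 - lam * S'"
  proof -
    have "Q = \<mu> i0 * (z$i0)^2 + (\<Sum>i\<in>{..<n} - {i0}. \<mu> i * (z$i)^2)"
      unfolding Q_def QF3(2) using sum.remove[OF _ i0m, of "\<lambda>i. \<mu> i * (z$i)^2"] by simp
    moreover have "(\<Sum>i\<in>{..<n} - {i0}. \<mu> i * (z$i)^2) \<ge> (\<Sum>i\<in>{..<n} - {i0}. (- lam) * (z$i)^2)"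
    proof (rule sum_mono)
      fix i assume "i \<in> {..<n} - {i0}"
      then have "- lam \<le> \<mu> i" using mub[of i] by auto
      then show "(- lam) * (z$i)^2 \<le> \<mu> i * (z$i)^2" by (rule mult_right_mono) simp
    qed
    moreover have "(\<Sum>i\<in>{..<n} - {i0}. (- lam) * (z$i)^2) = - lam * S'"
      unfolding S'_def by (simp add: sum_distrib_left)
    ultimately show ?thesis using i0 by simp
  qed
  have Rup: "R \<le> (real d)^2 * (z$i0)^2 + lam^2 * S'"
  proof -
    have "R = (\<mu> i0)^2 * (z$i0)^2 + (\<Sum>i\<in>{..<n} - {i0}. (\<mu> i)^2 * (z$i)^2)"
      unfolding R_def QF3(3) using sum.remove[OF _ i0m, of "\<lambda>i. (\<mu> i)^2 * (z$i)^2"] by simp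
    moreover have "(\<Sum>i\<in>{..<n} - {i0}. (\<mu> i)^2 * (z$i)^2) \<le> (\<Sum>i\<in>{..<n} - {i0}. lam^2 * (z$i)^2)"
    proof (rule sum_mono)
      fix i assume "i \<in> {..<n} - {i0}"
      then have "\<bar>\<mu> i\<bar> \<le> lam" using mub[of i] by auto
      then have "\<bar>\<mu> i\<bar>^2 \<le> lam^2" by (intro power_mono) auto
      then have "(\<mu> i)^2 \<le> lam^2" by simp
      then show "(\<mu> i)^2 * (z$i)^2 \<le> lam^2 * (z$i)^2" by (rule mult_right_mono) simp
    qed
    moreover have "(\<Sum>i\<in>{..<n} - {i0}. lam^2 * (z$i)^2) = lam^2 * S'"
      unfolding S'_def by (simp add: sum_distrib_left)
    ultimately show ?thesis using i0 by simp
  qed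
  have QW: "Q = (\<Sum>u\<in>W. real (g u))"
  proof -
    have "Q = (\<Sum>u<n. f$u * (A *\<^sub>v f)$u)" unfolding Q_def using f A by (simp add: sp_sum[of _ n])
    also have "\<dots> = (\<Sum>u<n. if u \<in> W then real (g u) else 0)"
    proof (rule sum.cong[OF refl])
      fix u assume "u \<in> {..<n}"
      then have "u < n" by simp
      moreover have "f$u = (if u \<in> W then 1 else 0)" using \<open>u < n\<close> unfolding f_def by simp
      ultimately show "f$u * (A *\<^sub>v f)$u = (if u \<in> W then real (g u) else 0)" using Af by simp
    qed
    also have "\<dots> = (\<Sum>u\<in>{..<n} \<inter> W. real (g u))" by (rule sum.inter_restrict[symmetric]) simp
    also have "{..<n} \<inter> W = W" using Wsub by auto
    finally show ?thesis .
  qed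
  have RBW: "R = (\<Sum>u\<in>B. (real (g u))^2) + (\<Sum>u\<in>W. (real (g u))^2)"
  proof -
    have Afc: "A *\<^sub>v f \<in> carrier_vec n" using A f by simp
    have "R = (\<Sum>u<n. (real (g u))^2)" unfolding R_def sp_sum[OF Afc Afc]
      by (rule sum.cong[OF refl]) (simp add: Af power2_eq_square)
    also have "{..<n} = B \<union> W" using BW by auto
    also have "(\<Sum>u\<in>B \<union> W. (real (g u))^2) = (\<Sum>u\<in>B. (real (g u))^2) + (\<Sum>u\<in>W. (real (g u))^2)"
      by (rule sum.union_disjoint) (use finB finW BW in auto)
    finally show ?thesis .
  qed
  have cnt: "real (card (nbhd n E u \<inter> S)) = (\<Sum>v\<in>S. if E u v then 1 else 0)"
    if "S \<subseteq> {0..<n}" "finite S" for u S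
  proof -
    have "nbhd n E u \<inter> S = {v\<in>S. E u v}" using that unfolding nbhd_def by auto
    then show ?thesis using sum.inter_filter[OF \<open>finite S\<close>, of "\<lambda>_. 1::real" "E u"] by simp
  qed
  have split: "real (card (nbhd n E v \<inter> B)) + real (g v) = real d" if "v \<in> W" for v
  proof -
    have "nbhd n E v = (nbhd n E v \<inter> B) \<union> (nbhd n E v \<inter> W)" using nbsub BW by blast
    then have "card (nbhd n E v) = card (nbhd n E v \<inter> B) + card (nbhd n E v \<inter> W)"
      using card_Un_disjoint[of "nbhd n E v \<inter> B" "nbhd n E v \<inter> W"] finnb BW by auto
    then show ?thesis using degu[of v] that Wsub unfolding g_def by auto
  qed
  have SB: "(\<Sum>u\<in>B. real (g u)) = real d * w - Q"
  proof -
    have "(\<Sum>u\<in>B. real (g u)) = (\<Sum>u\<in>B. \<Sum>v\<in>W. if E u v then 1 else 0)"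
      unfolding g_def by (rule sum.cong[OF refl], rule cnt[OF Wsub finW])
    also have "\<dots> = (\<Sum>v\<in>W. \<Sum>u\<in>B. if E u v then 1 else 0)" by (rule sum.swap)
    also have "\<dots> = (\<Sum>v\<in>W. real (card (nbhd n E v \<inter> B)))"
      by (rule sum.cong[OF refl]) (simp add: cnt[OF Bsub finB] Esym)
    also have "\<dots> = (\<Sum>v\<in>W. real d - real (g v))"
      by (rule sum.cong[OF refl]) (use split in force)
    also have "\<dots> = real d * w - Q" unfolding QW w_def by (simp add: sum_subtractf)
    finally show ?thesis .
  qed
  have CS: "(\<Sum>u\<in>W. (real (g u))^2) \<ge> Q^2 / w"
  proof -
    define c where "c = Q / w"
    have "0 \<le> (\<Sum>u\<in>W. (real (g u) - c)^2)" by (rule sum_nonneg) simp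
    also have "\<dots> = (\<Sum>u\<in>W. (real (g u))^2) - 2 * c * (\<Sum>u\<in>W. real (g u)) + w * c^2"
      unfolding w_def by (simp add: power2_diff sum.distrib sum_subtractf sum_distrib_left mult_ac)
    also have "\<dots> = (\<Sum>u\<in>W. (real (g u))^2) - Q^2 / w"
      unfolding QW[symmetric] c_def using wpos by (simp add: field_simps power2_eq_square)
    finally show ?thesis by simp
  qed
  have SBstrict: "k * (\<Sum>u\<in>B. real (g u)) < (\<Sum>u\<in>B. (real (g u))^2)"
  proof -
    have "(\<Sum>u\<in>B. k * real (g u)) < (\<Sum>u\<in>B. (real (g u))^2)"
    proof (rule sum_strict_mono_ex1[OF finB])
      show "\<forall>u\<in>B. k * real (g u) \<le> (real (g u))^2"
      proof
        fix u assume u: "u \<in> B"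
        show "k * real (g u) \<le> (real (g u))^2"
        proof (cases "g u = 0")
          case True then show ?thesis by simp
        next
          case False
          then have "k < real (g u)" using big[OF u] by simp
          then show ?thesis by (simp add: power2_eq_square mult_right_mono)
        qed
      qed
      have "k < real (g u0)" using big[OF u0] .
      moreover have "0 < real (g u0)" using u0 by simp
      ultimately have "k * real (g u0) < (real (g u0))^2"
        by (simp add: power2_eq_square mult_strict_right_mono)
      then show "\<exists>u\<in>B. k * real (g u) < (real (g u))^2" using u0 by blast
    qed
    then show ?thesis by (simp add: sum_distrib_left)
  qed
  have Qup: "Q \<le> real d * w"
  proof -
    have "Q \<le> (\<Sum>u\<in>W. real d)" unfolding QW
      by (rule sum_mono) (use gle Wsub in force)
    then show ?thesis unfolding w_def by (simp add: mult.commute)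
  qed
  define x where "x = w / real n"
  define y where "y = Q / w"
  have x0: "0 < x" and x1: "x \<le> 1" unfolding x_def using wpos npos wle by auto
  have Qy: "Q = y * w" unfolding y_def using wpos by simp
  have S'x: "S' = w * (1 - x)" using wS z0 unfolding x_def by (simp add: algebra_simps)
  have kx: "k = (real d + lam) * x + lam" unfolding k_def x_def by simp
  have ylow: "k - 2 * lam \<le> y"
  proof -
    have "y * w \<ge> (real d * x - lam * (1 - x)) * w"
      using Qlow unfolding Qy z0[folded x_def] S'x by (simp add: algebra_simps)
    then have "y \<ge> real d * x - lam * (1 - x)" using wpos by (simp add: mult_le_cancel_right)
    then show ?thesis using kx by (simp add: algebra_simps)
  qed
  have yup: "y \<le> real d" using Qup unfolding Qy using wpos by (simp add: mult_le_cancel_right)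
  have fa: "(real d - y) * (y + real d - k) \<le> ((real d)^2 - lam^2) * (1 - x)"
    by (rule final_arith[OF lam0 lam2 x0 x1 kx ylow yup])
  have "w * (k * (real d - y) + y^2) = k * (real d * w - Q) + Q^2 / w"
    unfolding Qy using wpos by (simp add: field_simps power2_eq_square)
  also have "\<dots> < R" using RBW CS SBstrict unfolding SB by linarith
  also have "\<dots> \<le> w * ((real d)^2 * x + lam^2 * (1 - x))"
    using Rup unfolding z0[folded x_def] S'x by (simp add: algebra_simps)
  finally have "k * (real d - y) + y^2 < (real d)^2 * x + lam^2 * (1 - x)"
    using wpos by (simp add: mult_less_cancel_left)
  moreover have "(real d)^2 * x + lam^2 * (1 - x) - (k * (real d - y) + y^2)
      = (real d - y) * (y + real d - k) - ((real d)^2 - lam^2) * (1 - x)"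
    by (simp add: algebra_simps power2_eq_square)
  ultimately show False using fa by linarith
qed

end
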